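(* There is a closed subgroup $G$ of $\mathbb Z^\omega$ such that for every closed subgroup $H$ of $\mathbb Z^\omega$ there is a continuous group homomorphism $\varphi:\mathbb Z^\omega\to\mathbb Z^\omega$ with $\varphi^{-1}(G)=H$.
   Context: $\mathbb Z$ carries the discrete topology and $\mathbb Z^\omega$ the product topology. *)

theory Defs
  imports "HOL-Analysis.Analysis"
begin

definition Zomega :: "(nat \<Rightarrow> int) topology" where
  "Zomega = product_topology (\<lambda>_. discrete_topology (UNIV :: int set)) UNIV"

definition is_subgroup_Zomega :: "(nat \<Rightarrow> int) set \<Rightarrow> bool" where
  "is_subgroup_Zomega H \<longleftrightarrow>
     (\<lambda>_. 0) \<in> H \<and>
     (\<forall>x\<in>H. \<forall>y\<in>H. (\<lambda>i. x i + y i) \<in> H) \<and>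
     (\<forall>x\<in>H. (\<lambda>i. - x i) \<in> H)"

definition is_hom_Zomega :: "((nat \<Rightarrow> int) \<Rightarrow> (nat \<Rightarrow> int)) \<Rightarrow> bool" where
  "is_hom_Zomega \<phi> \<longleftrightarrow> (\<forall>x y. \<phi> (\<lambda>i. x i + y i) = (\<lambda>i. \<phi> x i + \<phi> y i))"

end

theory Submission
  imports Defs "HOL-Library.Countable" "HOL-Library.Nat_Bijection"
begin

lemma topspace_Zomega[simp]: "topspace Zomega = UNIV"
  by (simp add: Zomega_def topspace_product_topology)

lemma closed_char:
  "closedin Zomega S \<longleftrightarrow> (\<forall>y. (\<forall>k. \<exists>s\<in>S. \<forall>i<k. s i = y i) \<longrightarrow> y \<in> S)"
proof
  assume c: "closedin Zomega S"
  show "\<forall>y. (\<forall>k. \<exists>s\<in>S. \<forall>i<k. s i = y i) \<longrightarrow> y \<in> S"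
  proof (intro allI impI)
    fix y assume P: "\<forall>k. \<exists>s\<in>S. \<forall>i<k. s i = y i"
    show "y \<in> S"
    proof (rule ccontr)
      assume ny: "y \<notin> S"
      have "openin Zomega (UNIV - S)" using c by (simp add: closedin_def)
      then obtain U where U: "finite {i. U i \<noteq> UNIV}" "y \<in> Pi\<^sub>E UNIV U" "Pi\<^sub>E UNIV U \<subseteq> UNIV - S"
        using ny unfolding Zomega_def openin_product_topology_alt by fastforce
      then obtain k where k: "\<forall>i\<in>{i. U i \<noteq> UNIV}. i < k"
        using finite_nat_set_iff_bounded by blast
      obtain s where s: "s \<in> S" "\<forall>i<k. s i = y i" using P by blast
      have "s \<in> Pi\<^sub>E UNIV U"
      proof -
        have "s i \<in> U i" for i
          using k s(2) U(2) by (cases "i < k") auto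
        then show ?thesis by auto
      qed
      then show False using U(3) s(1) by blast
    qed
  qed
next
  assume P: "\<forall>y. (\<forall>k. \<exists>s\<in>S. \<forall>i<k. s i = y i) \<longrightarrow> y \<in> S"
  have "openin Zomega (UNIV - S)"
    unfolding Zomega_def openin_product_topology_alt
  proof (intro ballI)
    fix y assume "y \<in> UNIV - S"
    then have "\<not> (\<forall>k. \<exists>s\<in>S. \<forall>i<k. s i = y i)" using P by blast
    then obtain k where k: "\<forall>s\<in>S. \<exists>i<k. s i \<noteq> y i" by blast
    define U where "U = (\<lambda>i. if i < k then {y i} else (UNIV::int set))"
    have "finite {i. U i \<noteq> UNIV}"
      by (rule finite_subset[of _ "{..<k}"]) (auto simp: U_def split: if_splits)
    moreover have "Pi\<^sub>E UNIV U \<subseteq> UNIV - S"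
    proof
      fix z assume z: "z \<in> Pi\<^sub>E UNIV U"
      have "\<forall>i<k. z i = y i"
      proof (intro allI impI)
        fix i assume "i < k"
        then show "z i = y i" using z[unfolded PiE_iff] by (metis U_def singletonD UNIV_I)
      qed
      then show "z \<in> UNIV - S" using k by blast
    qed
    moreover have "y \<in> Pi\<^sub>E UNIV U" by (auto simp: U_def)
    ultimately show "\<exists>U. finite {i \<in> UNIV. U i \<noteq> topspace (discrete_topology (UNIV::int set))} \<and>
          (\<forall>i\<in>UNIV. openin (discrete_topology (UNIV::int set)) (U i)) \<and> y \<in> Pi\<^sub>E UNIV U \<and> Pi\<^sub>E UNIV U \<subseteq> UNIV - S"
      apply - apply (rule exI[of _ U]) by simp
  qed
  then show "closedin Zomega S" by (simp add: closedin_def)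
qed

definition getl :: "int list \<Rightarrow> nat \<Rightarrow> int" where
  "getl g i = (if i < length g then g ! i else 0)"

definition Span :: "int list list \<Rightarrow> (nat \<Rightarrow> int) set" where
  "Span gs = {z. \<exists>c::nat \<Rightarrow> int. z = (\<lambda>i. \<Sum>j<length gs. c j * getl (gs ! j) i)}"

lemma Span_I: "(\<lambda>i. \<Sum>j<length gs. c j * getl (gs ! j) i) \<in> Span gs"
  unfolding Span_def by blast

lemma Span_Nil: "Span [] = {\<lambda>_. 0}"
  by (auto simp: Span_def)

lemma Span_Cons: "Span (g # gs) = {z. \<exists>a w. w \<in> Span gs \<and> z = (\<lambda>i. a * getl g i + w i)}"
proof (intro set_eqI iffI)
  fix z assume "z \<in> Span (g # gs)"
  then obtain c where c: "z = (\<lambda>i. \<Sum>j<Suc (length gs). c j * getl ((g#gs) ! j) i)"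
    by (auto simp: Span_def)
  have "z = (\<lambda>i. c 0 * getl g i + (\<Sum>j<length gs. c (Suc j) * getl (gs ! j) i))"
    unfolding c length_Cons sum.lessThan_Suc_shift by simp
  moreover have "(\<lambda>i. \<Sum>j<length gs. c (Suc j) * getl (gs ! j) i) \<in> Span gs"
    by (rule Span_I)
  ultimately show "z \<in> {z. \<exists>a w. w \<in> Span gs \<and> z = (\<lambda>i. a * getl g i + w i)}" by blast
next
  fix z assume "z \<in> {z. \<exists>a w. w \<in> Span gs \<and> z = (\<lambda>i. a * getl g i + w i)}"
  then obtain a c where z: "z = (\<lambda>i. a * getl g i + (\<Sum>j<length gs. c j * getl (gs ! j) i))"
    by (auto simp: Span_def)
  have eq: "z = (\<lambda>i. \<Sum>j<length (g#gs). case_nat a c j * getl ((g#gs) ! j) i)"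
    unfolding z length_Cons sum.lessThan_Suc_shift by simp
  show "z \<in> Span (g # gs)" unfolding eq by (rule Span_I)
qed

lemma Span_subgroup: "is_subgroup_Zomega (Span gs)"
  unfolding is_subgroup_Zomega_def
proof (intro conjI ballI)
  show "(\<lambda>_. 0) \<in> Span gs" unfolding Span_def
    by (rule CollectI, rule exI[of _ "\<lambda>_. 0"]) simp
next
  fix x y assume "x \<in> Span gs" "y \<in> Span gs"
  then obtain c d where x: "x = (\<lambda>i. \<Sum>j<length gs. c j * getl (gs ! j) i)"
    and y: "y = (\<lambda>i. \<Sum>j<length gs. d j * getl (gs ! j) i)" by (auto simp: Span_def)
  have eq: "(\<lambda>i. x i + y i) = (\<lambda>i. \<Sum>j<length gs. (c j + d j) * getl (gs ! j) i)"
    unfolding x y by (simp add: sum.distrib distrib_right)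
  show "(\<lambda>i. x i + y i) \<in> Span gs" unfolding eq by (rule Span_I)
next
  fix x assume "x \<in> Span gs"
  then obtain c where x: "x = (\<lambda>i. \<Sum>j<length gs. c j * getl (gs ! j) i)"
    by (auto simp: Span_def)
  have eq: "(\<lambda>i. - x i) = (\<lambda>i. \<Sum>j<length gs. (- c j) * getl (gs ! j) i)"
    unfolding x by (simp add: sum_negf)
  show "(\<lambda>i. - x i) \<in> Span gs" unfolding eq by (rule Span_I)
qed

lemma Span_vanish:
  assumes "z \<in> Span gs" "\<forall>g\<in>set gs. length g \<le> N" "N \<le> i"
  shows "z i = 0"
proof -
  obtain c where z: "z = (\<lambda>i. \<Sum>j<length gs. c j * getl (gs ! j) i)"
    using assms(1) by (auto simp: Span_def)
  have "getl (gs ! j) i = 0" if "j < length gs" for j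
    using assms(2,3) that nth_mem[OF that] by (fastforce simp: getl_def)
  then show ?thesis unfolding z by simp
qed

lemma sg_mult_nat:
  assumes "is_subgroup_Zomega L" "v \<in> L"
  shows "(\<lambda>i. int n * v i) \<in> L"
proof (induction n)
  case 0 then show ?case using assms(1) by (simp add: is_subgroup_Zomega_def)
next
  case (Suc n)
  then have h: "(\<lambda>i. int n * v i + v i) \<in> L" using assms by (simp add: is_subgroup_Zomega_def)
  have eq: "(\<lambda>i. int (Suc n) * v i) = (\<lambda>i. int n * v i + v i)" by (simp add: algebra_simps)
  show ?case unfolding eq by (rule h)
qed

lemma sg_mult:
  assumes "is_subgroup_Zomega L" "v \<in> L"
  shows "(\<lambda>i. c * v i) \<in> L"
proof (cases "c \<ge> 0")
  case True
  then show ?thesis using sg_mult_nat[OF assms, of "nat c"] by simp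
next
  case False
  have h: "(\<lambda>i. int (nat (-c)) * v i) \<in> L" by (rule sg_mult_nat[OF assms])
  have neg: "\<forall>x\<in>L. (\<lambda>i. - x i) \<in> L" using assms(1) unfolding is_subgroup_Zomega_def by blast
  have eq: "(\<lambda>i. c * v i) = (\<lambda>i. - (\<lambda>i. int (nat (-c)) * v i) i)" using False by simp
  show ?thesis unfolding eq using bspec[OF neg h] .
qed

lemma sg_add: "is_subgroup_Zomega L \<Longrightarrow> x \<in> L \<Longrightarrow> y \<in> L \<Longrightarrow> (\<lambda>i. x i + y i) \<in> L"
  by (simp add: is_subgroup_Zomega_def)

lemma sg_diff: "is_subgroup_Zomega L \<Longrightarrow> x \<in> L \<Longrightarrow> y \<in> L \<Longrightarrow> (\<lambda>i. x i - y i) \<in> L"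
  using sg_add[of L x "\<lambda>i. - y i"] by (simp add: is_subgroup_Zomega_def)

lemma fingen:
  "is_subgroup_Zomega L \<Longrightarrow> (\<forall>x\<in>L. \<forall>i\<ge>n. x i = 0) \<Longrightarrow> \<exists>gs. Span gs = L"
proof (induction n arbitrary: L)
  case 0
  have "L = {\<lambda>_. 0}"
  proof
    show "L \<subseteq> {\<lambda>_. 0}" using 0(2) by auto
    show "{\<lambda>_. 0} \<subseteq> L" using 0(1) by (simp add: is_subgroup_Zomega_def)
  qed
  then show ?case using Span_Nil by metis
next
  case (Suc n)
  note sg = Suc.prems(1)
  define L' where "L' = {x\<in>L. x n = 0}"
  have sg': "is_subgroup_Zomega L'"
    using sg unfolding L'_def is_subgroup_Zomega_def by auto
  have "\<forall>x\<in>L'. \<forall>i\<ge>n. x i = 0"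
  proof (intro ballI allI impI)
    fix x i assume "x \<in> L'" "n \<le> i"
    then show "x i = 0" using Suc.prems(2) unfolding L'_def
      by (cases "i = n") auto
  qed
  then obtain gs' where gs': "Span gs' = L'" using Suc.IH sg' by blast
  show ?case
  proof (cases "\<forall>x\<in>L. x n = 0")
    case True
    then have "L' = L" unfolding L'_def by auto
    then show ?thesis using gs' by blast
  next
    case False
    then obtain x0 where x0: "x0 \<in> L" "x0 n \<noteq> 0" by blast
    have "\<exists>k::nat. k > 0 \<and> (\<exists>x\<in>L. x n = int k)"
    proof (cases "x0 n > 0")
      case True then show ?thesis using x0 by (intro exI[of _ "nat (x0 n)"]) auto
    next
      case False
      have "(\<lambda>i. - x0 i) \<in> L" using sg x0 by (simp add: is_subgroup_Zomega_def)
      then show ?thesis using x0 False by (intro exI[of _ "nat (- x0 n)"]) auto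
    qed
    define d where "d = (LEAST k::nat. k > 0 \<and> (\<exists>x\<in>L. x n = int k))"
    have dP: "d > 0 \<and> (\<exists>x\<in>L. x n = int d)"
      unfolding d_def by (rule LeastI_ex) fact
    have dmin: "\<not> (k > 0 \<and> (\<exists>x\<in>L. x n = int k))" if "k < d" for k
      using not_less_Least[of k] that unfolding d_def by blast
    obtain v where v: "v \<in> L" "v n = int d" using dP by blast
    have gv: "getl (map v [0..<Suc n]) i = v i" for i
    proof (cases "i < Suc n")
      case True then show ?thesis by (simp add: getl_def del: upt_Suc)
    next
      case False then show ?thesis using Suc.prems(2) v(1) by (simp add: getl_def)
    qed
    have "Span (map v [0..<Suc n] # gs') = L"
    proof
      show "Span (map v [0..<Suc n] # gs') \<subseteq> L"
      proof
        fix z assume "z \<in> Span (map v [0..<Suc n] # gs')"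
        then obtain a w where w: "w \<in> L'" "z = (\<lambda>i. a * v i + w i)"
          unfolding Span_Cons gv gs' by blast
        have "(\<lambda>i. a * v i) \<in> L" by (rule sg_mult[OF sg v(1)])
        then show "z \<in> L" using w sg_add[OF sg] unfolding L'_def by auto
      qed
    next
      show "L \<subseteq> Span (map v [0..<Suc n] # gs')"
      proof
        fix x assume x: "x \<in> L"
        define q where "q = x n div int d"
        define y where "y = (\<lambda>i. x i - q * v i)"
        have yL: "y \<in> L" unfolding y_def using sg_diff[OF sg x sg_mult[OF sg v(1)]] by simp
        have yn: "y n = x n mod int d" unfolding y_def q_def using v(2)
          using minus_div_mult_eq_mod[of "x n" "int d"] by simp
        have "y n = 0"
        proof (rule ccontr)
          assume "y n \<noteq> 0"
          moreover have "y n \<ge> 0" "y n < int d" using yn dP by auto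
          ultimately have "nat (y n) < d" "nat (y n) > 0" "int (nat (y n)) = y n" by auto
          then show False using dmin[of "nat (y n)"] yL by metis
        qed
        then have "y \<in> L'" using yL unfolding L'_def by simp
        moreover have "x = (\<lambda>i. q * v i + y i)" unfolding y_def by simp
        ultimately show "x \<in> Span (map v [0..<Suc n] # gs')"
          unfolding Span_Cons gv gs' by blast
      qed
    qed
    then show ?thesis by blast
  qed
qed

definition trunc :: "nat \<Rightarrow> (nat \<Rightarrow> int) \<Rightarrow> (nat \<Rightarrow> int)" where
  "trunc n x = (\<lambda>i. if i < n then x i else 0)"

definition blk :: "nat \<Rightarrow> (nat \<Rightarrow> int) \<Rightarrow> (nat \<Rightarrow> int)" where
  "blk m y = (\<lambda>i. y (prod_encode (m, i)))"

definition Gu :: "(nat \<Rightarrow> int) set" where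
  "Gu = {y. \<forall>m. blk m y \<in> Span (snd (from_nat m :: nat \<times> int list list))}"

lemma trunc_subgroup:
  assumes "is_subgroup_Zomega H"
  shows "is_subgroup_Zomega (trunc n ` H)"
  unfolding is_subgroup_Zomega_def
proof (intro conjI ballI)
  have "(\<lambda>_. 0) = trunc n (\<lambda>_. 0)" by (simp add: trunc_def)
  moreover have "(\<lambda>_. 0) \<in> H" using assms by (simp add: is_subgroup_Zomega_def)
  ultimately show "(\<lambda>_. 0) \<in> trunc n ` H" by blast
next
  fix x y assume "x \<in> trunc n ` H" "y \<in> trunc n ` H"
  then obtain a b where ab: "a \<in> H" "b \<in> H" "x = trunc n a" "y = trunc n b" by blast
  have "(\<lambda>i. x i + y i) = trunc n (\<lambda>i. a i + b i)" using ab by (simp add: trunc_def fun_eq_iff)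
  moreover have "(\<lambda>i. a i + b i) \<in> H" using assms ab by (simp add: is_subgroup_Zomega_def)
  ultimately show "(\<lambda>i. x i + y i) \<in> trunc n ` H" by blast
next
  fix x assume "x \<in> trunc n ` H"
  then obtain a where ab: "a \<in> H" "x = trunc n a" by blast
  have "(\<lambda>i. - x i) = trunc n (\<lambda>i. - a i)" using ab by (simp add: trunc_def fun_eq_iff)
  moreover have "(\<lambda>i. - a i) \<in> H" using assms ab by (simp add: is_subgroup_Zomega_def)
  ultimately show "(\<lambda>i. - x i) \<in> trunc n ` H" by blast
qed

lemma Gu_subgroup: "is_subgroup_Zomega Gu"
  unfolding is_subgroup_Zomega_def
proof (intro conjI ballI)
  show "(\<lambda>_. 0) \<in> Gu"
    using Span_subgroup unfolding Gu_def blk_def is_subgroup_Zomega_def by simp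
next
  fix x y assume "x \<in> Gu" "y \<in> Gu"
  then show "(\<lambda>i. x i + y i) \<in> Gu"
    using Span_subgroup unfolding Gu_def blk_def is_subgroup_Zomega_def by simp
next
  fix x assume "x \<in> Gu"
  then show "(\<lambda>i. - x i) \<in> Gu"
    using Span_subgroup unfolding Gu_def blk_def is_subgroup_Zomega_def by simp
qed

lemma Gu_closed: "closedin Zomega Gu"
  unfolding closed_char
proof (intro allI impI)
  fix y assume P: "\<forall>k. \<exists>s\<in>Gu. \<forall>i<k. s i = y i"
  show "y \<in> Gu" unfolding Gu_def
  proof (intro CollectI allI)
    fix m
    define gs where "gs = snd (from_nat m :: nat \<times> int list list)"
    define N where "N = Max (insert 0 (length ` set gs))"
    have hN: "\<forall>g\<in>set gs. length g \<le> N" unfolding N_def by simp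
    have inG: "blk m s \<in> Span gs" if "s \<in> Gu" for s
      using that unfolding Gu_def gs_def by blast
    define K where "K = Suc (\<Sum>i\<le>N. prod_encode (m, i))"
    obtain s where s: "s \<in> Gu" "\<forall>i<K. s i = y i" using P by blast
    have "blk m y = blk m s"
    proof
      fix i
      show "blk m y i = blk m s i"
      proof (cases "i \<le> N")
        case True
        have "prod_encode (m, i) \<le> (\<Sum>i\<le>N. prod_encode (m, i))"
          by (rule member_le_sum) (use True in auto)
        then have "prod_encode (m, i) < K" unfolding K_def by simp
        then show ?thesis using s(2) unfolding blk_def by simp
      next
        case False
        obtain s' where s': "s' \<in> Gu" "\<forall>j<Suc (prod_encode (m, i)). s' j = y j" using P by blast
        have "blk m s' i = 0" using Span_vanish[OF inG[OF s'(1)] hN] False by simp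
        then have "blk m y i = 0" using s'(2) unfolding blk_def by simp
        moreover have "blk m s i = 0" using Span_vanish[OF inG[OF s(1)] hN] False by simp
        ultimately show ?thesis by simp
      qed
    qed
    then show "blk m y \<in> Span (snd (from_nat m :: nat \<times> int list list))"
      using inG[OF s(1)] unfolding gs_def by simp
  qed
qed

theorem mainTheorem7:
  shows "\<exists>G. is_subgroup_Zomega G \<and> closedin Zomega G \<and>
    (\<forall>H. is_subgroup_Zomega H \<and> closedin Zomega H \<longrightarrow>
      (\<exists>\<phi>. continuous_map Zomega Zomega \<phi> \<and> is_hom_Zomega \<phi> \<and> \<phi> -` G = H))"
proof (intro exI[of _ Gu] conjI allI impI Gu_subgroup Gu_closed)
  fix H assume "is_subgroup_Zomega H \<and> closedin Zomega H"
  then have sgH: "is_subgroup_Zomega H" and clH: "closedin Zomega H" by auto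
  define T where "T n = trunc n ` H" for n
  define good where "good m \<longleftrightarrow> Span (snd (from_nat m :: nat \<times> int list list)) = T (fst (from_nat m :: nat \<times> int list list))" for m
  define \<phi> where "\<phi> x = (\<lambda>j. if good (fst (prod_decode j)) \<and> snd (prod_decode j) < fst (from_nat (fst (prod_decode j)) :: nat \<times> int list list)
      then x (snd (prod_decode j)) else 0)" for x :: "nat \<Rightarrow> int"
  have cont: "continuous_map Zomega Zomega \<phi>"
    unfolding Zomega_def continuous_map_componentwise_UNIV
  proof
    fix k
    let ?c = "good (fst (prod_decode k)) \<and> snd (prod_decode k) < fst (from_nat (fst (prod_decode k)) :: nat \<times> int list list)"
    show "continuous_map (product_topology (\<lambda>_. discrete_topology (UNIV::int set)) UNIV) (discrete_topology UNIV) (\<lambda>x. \<phi> x k)"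
    proof (cases ?c)
      case True
      then have "(\<lambda>x. \<phi> x k) = (\<lambda>x. x (snd (prod_decode k)))" by (simp add: \<phi>_def)
      then show ?thesis
        using continuous_map_product_projection[of "snd (prod_decode k)" UNIV "\<lambda>_. discrete_topology (UNIV::int set)"] by simp
    next
      case False
      then have "(\<lambda>x. \<phi> x k) = (\<lambda>x. 0)" unfolding \<phi>_def by (simp only: if_False)
      then show ?thesis by simp
    qed
  qed
  have hom: "is_hom_Zomega \<phi>"
    unfolding is_hom_Zomega_def \<phi>_def by (simp add: fun_eq_iff)
  have blkphi: "blk m (\<phi> x) = (if good m then trunc (fst (from_nat m :: nat \<times> int list list)) x else (\<lambda>_. 0))" for m x
    by (simp add: blk_def \<phi>_def trunc_def fun_eq_iff)
  have zeroS: "(\<lambda>_. 0) \<in> Span gs" for gs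
    using Span_subgroup unfolding is_subgroup_Zomega_def by blast
  have key: "x \<in> \<phi> -` Gu \<longleftrightarrow> (\<forall>m. good m \<longrightarrow> trunc (fst (from_nat m :: nat \<times> int list list)) x \<in> T (fst (from_nat m :: nat \<times> int list list)))" for x
    unfolding Gu_def using zeroS by (auto simp: blkphi good_def)
  have "\<phi> -` Gu = H"
  proof
    show "\<phi> -` Gu \<subseteq> H"
    proof
      fix x assume "x \<in> \<phi> -` Gu"
      then have K: "\<forall>m. good m \<longrightarrow> trunc (fst (from_nat m :: nat \<times> int list list)) x \<in> T (fst (from_nat m :: nat \<times> int list list))"
        using key by blast
      have all: "trunc n x \<in> T n" for n
      proof -
        have "\<forall>z\<in>T n. \<forall>i\<ge>n. z i = 0" unfolding T_def trunc_def by auto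
        then obtain gs where gs: "Span gs = T n"
          using fingen[OF trunc_subgroup[OF sgH]] unfolding T_def by blast
        define m where "m = to_nat (n, gs)"
        have fm: "from_nat m = (n, gs)" unfolding m_def by simp
        have "good m" unfolding good_def fm using gs by simp
        then show ?thesis using K fm by fastforce
      qed
      show "x \<in> H" using clH unfolding closed_char
      proof (elim allE impE)
        show "\<forall>k. \<exists>s\<in>H. \<forall>i<k. s i = x i"
        proof
          fix k
          obtain s where s: "s \<in> H" "trunc k x = trunc k s" using all[of k] unfolding T_def by blast
          have "\<forall>i<k. s i = x i"
          proof (intro allI impI)
            fix i assume "i < k"
            then show "s i = x i" using fun_cong[OF s(2), of i] unfolding trunc_def by simp
          qed
          then show "\<exists>s\<in>H. \<forall>i<k. s i = x i" using s(1) by blast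
        qed
      qed
    qed
  next
    show "H \<subseteq> \<phi> -` Gu"
    proof
      fix x assume "x \<in> H"
      then have "trunc n x \<in> T n" for n unfolding T_def by blast
      then show "x \<in> \<phi> -` Gu" using key by blast
    qed
  qed
  then show "\<exists>\<phi>. continuous_map Zomega Zomega \<phi> \<and> is_hom_Zomega \<phi> \<and> \<phi> -` Gu = H"
    using cont hom by blast
qed

end
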